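(* Let $\rho\in\mathfrak M_d$ with $\Sigma=\Sigma(\rho)$ invertible, and let $\theta\in\Delta_d$ with all $n\theta_i$ integers. In the fixed-composition model the canonical estimator $\widehat\theta_\rho$ is unbiased and $$R^{\mathrm{fc}}_\theta(\rho)=\frac1n\sum_{i=1}^d\theta_i\Big[\operatorname{tr}\bigl(\Sigma^{-1}B_i(\rho)\Sigma^{-1}\bigr)-\frac{d-1}{d}\Big].$$ Consequently $\theta\mapsto R^{\mathrm{fc}}_\theta(\rho)$ is (the restriction of) an affine function, its supremum over admissible $\theta$ equals $\max_i R^{\mathrm{fc}}_{e_i}(\rho)$, and $$\frac1d\sum_{i=1}^d R^{\mathrm{fc}}_{e_i}(\rho)=\frac1n\Big[\operatorname{tr}\Sigma(\rho)^{-1}-\frac{d-1}{d}\Big].$$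
   Context: Fix $d\ge2$. Let $H\in\mathbb R^{d\times(d-1)}$ have orthonormal columns spanning $\{u\in\mathbb R^d:\mathbf 1^\top u=0\}$, $\gamma_i:=H^\top e_i$, $\mathcal X_d:=\{x\in\mathbb R^{d-1}:1+\gamma_i^\top x\ge0\ \forall i\}$, $\Delta_d$ the probability simplex in $\mathbb R^d$. An anchored law is a Borel probability measure $\rho$ on $\mathcal X_d$ with $\int x\,\rho(dx)=0$; $\mathfrak M_d$ is the set of anchored laws; $W_\rho(B\mid i):=\int_B(1+\gamma_i^\top x)\rho(dx)$. Define $\Sigma(\rho):=\int xx^\top\rho(dx)$ and $B_i(\rho):=\int(1+\gamma_i^\top x)xx^\top\rho(dx)$. Fixed-composition model: given $n\ge1$ and $\theta\in\Delta_d$ with $n\theta_i\in\mathbb Z$, $X_1,\dots,X_n$ are independent with exactly $n\theta_i$ of them drawn from $W_\rho(\cdot\mid i)$. The canonical estimator is $\widehat\theta_\rho:=\mathbf 1/d+H\Sigma(\rho)^{-1}\bar X$, $\bar X:=\frac1n\sum_m X_m$, and $R^{\mathrm{fc}}_\theta(\rho):=\mathbb E_\theta\|\widehat\theta_\rho-\theta\|_2^2$ in this model. *)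

theory Defs
  imports "HOL-Probability.Probability"
begin

text \<open>Dimensions: 'd indexes coordinates of R^d, 'k indexes coordinates of R^(d-1)
  (the statement assumes CARD('d) = CARD('k) + 1).\<close>

definition gam :: "real^'k^'d \<Rightarrow> 'd \<Rightarrow> real^'k" where
  "gam H i = row i H"

definition Xd :: "real^'k^'d \<Rightarrow> (real^'k) set" where
  "Xd H = {x. \<forall>i. 0 \<le> 1 + gam H i \<bullet> x}"

definition anchored :: "real^'k^'d \<Rightarrow> (real^'k) measure \<Rightarrow> bool" where
  "anchored H \<rho> \<longleftrightarrow> prob_space \<rho> \<and> sets \<rho> = sets borel \<and>
     emeasure \<rho> (Xd H) = 1 \<and> integral\<^sup>L \<rho> (\<lambda>x. x) = 0"

definition Wcond :: "real^'k^'d \<Rightarrow> (real^'k) measure \<Rightarrow> 'd \<Rightarrow> (real^'k) measure" where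
  "Wcond H \<rho> i = density \<rho> (\<lambda>x. ennreal (1 + gam H i \<bullet> x))"

definition outer :: "real^'k \<Rightarrow> real^'k \<Rightarrow> real^'k^'k" where
  "outer x y = (\<chi> a b. x$a * y$b)"

definition Sig :: "(real^'k) measure \<Rightarrow> real^'k^'k" where
  "Sig \<rho> = integral\<^sup>L \<rho> (\<lambda>x. outer x x)"

definition Bmat :: "real^'k^'d \<Rightarrow> (real^'k) measure \<Rightarrow> 'd \<Rightarrow> real^'k^'k" where
  "Bmat H \<rho> i = integral\<^sup>L \<rho> (\<lambda>x. (1 + gam H i \<bullet> x) *\<^sub>R outer x x)"

definition admissible :: "nat \<Rightarrow> real^'d \<Rightarrow> bool" where
  "admissible n \<theta> \<longleftrightarrow> (\<forall>i. 0 \<le> \<theta>$i) \<and> (\<Sum>i\<in>UNIV. \<theta>$i) = 1 \<and>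
     (\<forall>i. real n * \<theta>$i \<in> \<int>)"

text \<open>An assignment c: sample m (m < n) is drawn from W(.|c m); exactly n*theta_i
  samples are drawn from W(.|i).\<close>
definition composition :: "nat \<Rightarrow> real^'d \<Rightarrow> (nat \<Rightarrow> 'd) \<Rightarrow> bool" where
  "composition n \<theta> c \<longleftrightarrow> (\<forall>i. real (card {m. m < n \<and> c m = i}) = real n * \<theta>$i)"

definition fc_law :: "real^'k^'d \<Rightarrow> (real^'k) measure \<Rightarrow> nat \<Rightarrow> (nat \<Rightarrow> 'd)
    \<Rightarrow> (nat \<Rightarrow> real^'k) measure" where
  "fc_law H \<rho> n c = PiM {..<n} (\<lambda>m. Wcond H \<rho> (c m))"

definition est :: "real^'k^'d \<Rightarrow> (real^'k) measure \<Rightarrow> nat \<Rightarrow> (nat \<Rightarrow> real^'k) \<Rightarrow> real^'d" where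
  "est H \<rho> n X = (\<chi> i. 1 / real CARD('d)) +
     H *v (matrix_inv (Sig \<rho>) *v ((1 / real n) *\<^sub>R (\<Sum>m<n. X m)))"

definition fc_risk :: "real^'k^'d \<Rightarrow> (real^'k) measure \<Rightarrow> nat \<Rightarrow> real^'d \<Rightarrow> (nat \<Rightarrow> 'd) \<Rightarrow> real" where
  "fc_risk H \<rho> n \<theta> c = (\<integral>X. (norm (est H \<rho> n X - \<theta>))\<^sup>2 \<partial>fc_law H \<rho> n c)"

text \<open>R^fc_theta(rho): risk for some assignment realising composition theta
  (the theorem shows it does not depend on the choice).\<close>
definition R_fc :: "real^'k^'d \<Rightarrow> (real^'k) measure \<Rightarrow> nat \<Rightarrow> real^'d \<Rightarrow> real" where
  "R_fc H \<rho> n \<theta> = fc_risk H \<rho> n \<theta> (SOME c. composition n \<theta> c)"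

end

theory Submission imports Defs begin

lemma matrix_inv_props:
  fixes S :: "real^'n^'n"
  assumes "invertible S"
  shows "S ** matrix_inv S = mat 1" "matrix_inv S ** S = mat 1"
proof -
  have "\<exists>A'. S ** A' = mat 1 \<and> A' ** S = mat 1" using assms invertible_def by blast
  from someI_ex[OF this] show "S ** matrix_inv S = mat 1" "matrix_inv S ** S = mat 1"
    unfolding matrix_inv_def by auto
qed

lemma matrix_inv_sym:
  fixes S :: "real^'n^'n"
  assumes "invertible S" "transpose S = S"
  shows "transpose (matrix_inv S) = matrix_inv S"
proof -
  let ?A = "matrix_inv S"
  have "transpose ?A ** S = mat 1"
    by (metis assms(2) matrix_inv_props(1)[OF assms(1)] matrix_transpose_mul transpose_mat)
  then have "transpose ?A = (transpose ?A ** S) ** ?A"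
    by (metis assms(1) matrix_inv_props(1) matrix_mul_assoc matrix_mul_rid)
  then show ?thesis using \<open>transpose ?A ** S = mat 1\<close> by simp
qed

lemma span_columns_range:
  fixes H :: "real^'k^'d"
  shows "span (columns H) = range (\<lambda>w. H *v w)"
proof
  have "subspace (range (\<lambda>w. H *v w))"
    using linear_subspace_image[OF matrix_vector_mul_linear subspace_UNIV] by (simp add: image_def)
  moreover have "columns H \<subseteq> range (\<lambda>w. H *v w)"
    by (auto simp: columns_image_basis)
  ultimately show "span (columns H) \<subseteq> range (\<lambda>w. H *v w)" by (simp add: span_minimal)
  show "range (\<lambda>w. H *v w) \<subseteq> span (columns H)"
    using matrix_vector_mult_in_columnspace by blast
qed


context
  fixes H :: "real^'k^'d"
  assumes orth: "\<forall>j j'. column j H \<bullet> column j' H = (if j = j' then 1 else 0)"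
    and spn: "span (columns H) = {u. (\<Sum>i\<in>UNIV. u$i) = 0}"
begin

lemma HtH: "transpose H ** H = mat 1"
proof -
  have "(transpose H ** H)$j$j' = column j H \<bullet> column j' H" for j j'
    by (simp add: matrix_matrix_mult_def transpose_def column_def inner_vec_def)
  then show ?thesis using orth by (simp add: vec_eq_iff mat_def)
qed

lemma norm_H: "norm (H *v v) = norm v"
proof -
  have "(H *v v) \<bullet> (H *v v) = v \<bullet> v"
    by (metis HtH dot_lmul_matrix matrix_vector_mul_assoc matrix_vector_mul_lid vector_transpose_matrix)
  then show ?thesis by (metis norm_eq_sqrt_inner)
qed

lemma Ht1: "transpose H *v (\<chi> i. 1) = 0"
proof -
  have "column j H \<in> span (columns H)" for j by (auto simp: columns_def intro!: span_base)
  then have "(\<Sum>i\<in>UNIV. H$i$j) = 0" for j using spn by (simp add: column_def)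
  then show ?thesis by (simp add: vec_eq_iff matrix_vector_mult_def transpose_def)
qed

lemma proj: "H *v (transpose H *v u) = u - ((\<Sum>i\<in>UNIV. u$i) / real CARD('d)) *\<^sub>R (\<chi> i. 1)"
proof -
  define c where "c = (\<Sum>i\<in>UNIV. u$i) / real CARD('d)"
  define v where "v = u - c *\<^sub>R (\<chi> i. 1)"
  have "(\<Sum>i\<in>UNIV. v$i) = 0" by (simp add: v_def c_def sum_subtractf)
  then have "v \<in> range (\<lambda>w. H *v w)" using spn span_columns_range by blast
  then obtain w where w: "v = H *v w" by auto
  have u: "u = H *v w + c *\<^sub>R (\<chi> i. 1)" using w v_def by (simp add: algebra_simps)
  have "transpose H *v u = transpose H *v (H *v w) + c *\<^sub>R (transpose H *v (\<chi> i. 1))"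
    by (subst u) (metis matrix_vector_right_distrib matrix_vector_mult_scaleR)
  also have "\<dots> = w" using HtH Ht1 by (simp add: matrix_vector_mul_assoc)
  finally show ?thesis using w v_def c_def by simp
qed

lemma gam_sum: "(\<Sum>i\<in>UNIV. gam H i) = 0"
proof -
  have "(\<Sum>i\<in>UNIV. gam H i) = transpose H *v (\<chi> i. 1)"
    by (simp add: vec_eq_iff gam_def row_def matrix_vector_mult_def transpose_def sum_component)
  then show ?thesis using Ht1 by simp
qed

lemma gam_norm: "gam H i \<bullet> gam H i = 1 - 1 / real CARD('d)"
proof -
  have "transpose H *v axis i 1 = gam H i"
  proof -
    have "(\<Sum>ib\<in>UNIV. (if ib = i then 1 else 0) * H $ ib $ ia) = H $ i $ ia" for ia
      by (subst sum.cong[OF refl, of _ _ "\<lambda>ib. if ib = i then H$ib$ia else 0"]) auto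
    then show ?thesis unfolding vec_eq_iff transpose_matrix_vector
      by (simp add: vector_matrix_mult_def axis_def gam_def row_def)
  qed
  moreover have "(H *v gam H i)$i = gam H i \<bullet> gam H i"
    by (simp add: gam_def row_def matrix_vector_mult_def inner_vec_def mult.commute)
  ultimately have "gam H i \<bullet> gam H i = (axis i 1 - ((\<Sum>j\<in>UNIV. axis i 1 $ j) / real CARD('d)) *\<^sub>R (\<chi> i. (1::real)))$i"
    using proj[of "axis i 1"] by simp
  also have "\<dots> = 1 - 1 / real CARD('d)"
    by (simp add: axis_def)
  finally show ?thesis .
qed

lemma Ht_theta: "(\<Sum>i\<in>UNIV. \<theta>$i *\<^sub>R gam H i) = transpose H *v \<theta>"
  by (simp add: vec_eq_iff gam_def row_def matrix_vector_mult_def transpose_def sum_component mult.commute)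

lemma Hv_comp: "(H *v x)$i = gam H i \<bullet> x"
  by (simp add: gam_def row_def matrix_vector_mult_def inner_vec_def)

lemma Xd_bound:
  assumes "x \<in> Xd H"
  shows "norm x \<le> real CARD('d) * real CARD('d)"
proof -
  have nn: "0 \<le> 1 + gam H i \<bullet> x" for i using assms by (simp add: Xd_def)
  have "(\<Sum>i\<in>UNIV. 1 + gam H i \<bullet> x) = real CARD('d) + (\<Sum>i\<in>UNIV. gam H i) \<bullet> x"
    by (simp add: sum.distrib inner_sum_left)
  also have "\<dots> = real CARD('d)" by (simp add: gam_sum)
  finally have s: "(\<Sum>i\<in>UNIV. 1 + gam H i \<bullet> x) = real CARD('d)" .
  have "1 + gam H i \<bullet> x \<le> real CARD('d)" for i
    using member_le_sum[of i UNIV "\<lambda>i. 1 + gam H i \<bullet> x"] nn s by simp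
  then have b: "\<bar>(H *v x)$i\<bar> \<le> real CARD('d)" for i
  proof -
    have "1 \<le> real CARD('d)" by simp
    then show ?thesis using nn[of i] \<open>1 + gam H i \<bullet> x \<le> real CARD('d)\<close> unfolding Hv_comp by linarith
  qed
  have "norm x = norm (H *v x)" by (simp add: norm_H)
  also have "\<dots> \<le> (\<Sum>i\<in>UNIV. \<bar>(H *v x)$i\<bar>)" by (rule norm_le_l1_cart)
  also have "\<dots> \<le> (\<Sum>i\<in>(UNIV::'d set). real CARD('d))" by (rule sum_mono) (use b in auto)
  finally show ?thesis by simp
qed


context
  fixes \<rho> :: "(real^'k) measure"
  assumes anc: "anchored H \<rho>"
begin

lemma rho_prob: "prob_space \<rho>" using anc by (simp add: anchored_def)
lemma rho_sets: "sets \<rho> = sets borel" using anc by (simp add: anchored_def)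
lemma rho_mean: "integral\<^sup>L \<rho> (\<lambda>x. x) = 0" using anc by (simp add: anchored_def)

lemma Xd_borel: "Xd H \<in> sets borel"
  unfolding Xd_def by measurable

lemma AE_Xd: "AE x in \<rho>. x \<in> Xd H"
proof -
  interpret prob_space \<rho> by (rule rho_prob)
  have ev: "Xd H \<in> events" using Xd_borel rho_sets by simp
  have "prob (Xd H) = 1" using anc by (simp add: anchored_def measure_def)
  then show ?thesis using AE_in_set_eq_1[OF ev] by simp
qed

lemma AE_nn: "AE x in \<rho>. 0 \<le> 1 + gam H i \<bullet> x"
  using AE_Xd by eventually_elim (simp add: Xd_def)

lemma meas_cont:
  fixes f :: "real^'k \<Rightarrow> 'b::topological_space"
  assumes "continuous_on UNIV f"
  shows "f \<in> borel_measurable \<rho>"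
  using borel_measurable_continuous_onI[OF assms] measurable_cong_sets[OF rho_sets refl] by blast

lemma int_cont:
  fixes f :: "real^'k \<Rightarrow> 'b::{banach,second_countable_topology}"
  assumes "continuous_on UNIV f"
  shows "integrable \<rho> f"
proof -
  interpret prob_space \<rho> by (rule rho_prob)
  define K where "K = real CARD('d) * real CARD('d)"
  have "compact (f ` cball 0 K)"
    by (intro compact_continuous_image continuous_on_subset[OF assms]) auto
  then obtain B where B: "\<And>y. y \<in> f ` cball 0 K \<Longrightarrow> norm y \<le> B"
    using compact_imp_bounded bounded_iff by metis
  have "AE x in \<rho>. norm (f x) \<le> B"
    using AE_Xd
  proof eventually_elim
    case (elim x)
    then have "x \<in> cball 0 K" using Xd_bound[of x] by (simp add: K_def)
    then show ?case using B by blast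
  qed
  then show ?thesis by (rule integrable_const_bound) (rule meas_cont[OF assms])
qed

lemma lin_int:
  fixes T :: "'a::euclidean_space \<Rightarrow> 'b::euclidean_space"
  assumes "linear T" "integrable \<rho> f"
  shows "integral\<^sup>L \<rho> (\<lambda>x. T (f x)) = T (integral\<^sup>L \<rho> f)"
  using assms by (simp add: integral_bounded_linear linear_conv_bounded_linear)

abbreviation W where "W i \<equiv> Wcond H \<rho> i"

lemma W_int:
  fixes f :: "real^'k \<Rightarrow> 'b::{banach,second_countable_topology}"
  assumes "continuous_on UNIV f"
  shows "integrable (W i) f"
    and "integral\<^sup>L (W i) f = integral\<^sup>L \<rho> (\<lambda>x. (1 + gam H i \<bullet> x) *\<^sub>R f x)"
proof -
  have m: "(\<lambda>x. 1 + gam H i \<bullet> x) \<in> borel_measurable \<rho>"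
    by (rule meas_cont) (intro continuous_intros)
  have c2: "continuous_on UNIV (\<lambda>x. (1 + gam H i \<bullet> x) *\<^sub>R f x)"
    by (intro continuous_intros assms)
  show "integrable (W i) f" unfolding Wcond_def
    using integrable_density[OF meas_cont[OF assms] m AE_nn] int_cont[OF c2] by simp
  show "integral\<^sup>L (W i) f = integral\<^sup>L \<rho> (\<lambda>x. (1 + gam H i \<bullet> x) *\<^sub>R f x)" unfolding Wcond_def
    by (rule integral_density[OF meas_cont[OF assms] m AE_nn])
qed

lemma W_prob: "prob_space (W i)"
proof
  have m: "(\<lambda>x. 1 + gam H i \<bullet> x) \<in> borel_measurable \<rho>"
    by (rule meas_cont) (intro continuous_intros)
  have i1: "integrable \<rho> (\<lambda>x. 1 + gam H i \<bullet> x)" by (rule int_cont) (intro continuous_intros)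
  have ix: "integrable \<rho> (\<lambda>x. x)" by (rule int_cont) (intro continuous_intros)
  interpret prob_space \<rho> by (rule rho_prob)
  have "integral\<^sup>L \<rho> (\<lambda>x. 1 + gam H i \<bullet> x) = 1 + integral\<^sup>L \<rho> (\<lambda>x. gam H i \<bullet> x)"
    using ix by (simp add: prob_space)
  also have "integral\<^sup>L \<rho> (\<lambda>x. gam H i \<bullet> x) = gam H i \<bullet> integral\<^sup>L \<rho> (\<lambda>x. x)"
    using ix by simp
  finally have "integral\<^sup>L \<rho> (\<lambda>x. 1 + gam H i \<bullet> x) = 1" using rho_mean by simp
  then show "emeasure (W i) (space (W i)) = 1"
  proof -
    have "(\<integral>\<^sup>+ x. ennreal (1 + gam H i \<bullet> x) * indicator (space \<rho>) x \<partial>\<rho>) = (\<integral>\<^sup>+ x. ennreal (1 + gam H i \<bullet> x) \<partial>\<rho>)"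
      by (rule nn_integral_cong) (simp add: indicator_def)
    also have "\<dots> = 1" using nn_integral_eq_integral[OF i1 AE_nn] \<open>integral\<^sup>L \<rho> (\<lambda>x. 1 + gam H i \<bullet> x) = 1\<close> by simp
    finally show ?thesis using m unfolding Wcond_def space_density by (subst emeasure_density) auto
  qed
qed


lemma cont_outer[continuous_intros]: "continuous_on S (\<lambda>x. outer (f x) (g x))"
  if "continuous_on S f" "continuous_on S g" for f g :: "_ \<Rightarrow> real^'k"
  unfolding outer_def using that by (intro continuous_intros)

lemma int1: "integral\<^sup>L \<rho> (\<lambda>x. 1 + gam H i \<bullet> x) = 1"
proof -
  have ix: "integrable \<rho> (\<lambda>x. x)" by (rule int_cont) (intro continuous_intros)
  interpret prob_space \<rho> by (rule rho_prob)
  have "integral\<^sup>L \<rho> (\<lambda>x. 1 + gam H i \<bullet> x) = 1 + integral\<^sup>L \<rho> (\<lambda>x. gam H i \<bullet> x)"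
    using ix by (simp add: prob_space)
  also have "integral\<^sup>L \<rho> (\<lambda>x. gam H i \<bullet> x) = gam H i \<bullet> integral\<^sup>L \<rho> (\<lambda>x. x)"
    using ix by simp
  finally show ?thesis using rho_mean by simp
qed

lemma outer_mv: "outer x x *v v = (x \<bullet> v) *\<^sub>R x"
  by (simp add: vec_eq_iff outer_def matrix_vector_mult_def inner_vec_def sum_distrib_left mult_ac)

lemma lin_mv: "linear (\<lambda>M::real^'k^'k. M *v v)"
  by (rule linearI) (simp_all add: vec_eq_iff matrix_vector_mult_def sum.distrib sum_distrib_left algebra_simps)

lemma lin_tr: "linear (\<lambda>M::real^'k^'k. trace (A ** M ** A'))"
  by (rule linearI) (simp_all add: trace_def matrix_matrix_mult_def sum.distrib sum_distrib_left algebra_simps)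

lemma tr_outer: "trace (A ** outer x x ** A') = (A *v x) \<bullet> (transpose A' *v x)"
  for A A' :: "real^'k^'k"
  by (simp add: trace_def matrix_matrix_mult_def outer_def matrix_vector_mult_def inner_vec_def
      transpose_def sum_distrib_left sum_distrib_right mult_ac)

lemma S_sym: "transpose (Sig \<rho>) = Sig \<rho>"
proof -
  have lt: "linear (transpose :: real^'k^'k \<Rightarrow> _)"
    by (rule linearI) (simp_all add: vec_eq_iff transpose_def)
  have io: "integrable \<rho> (\<lambda>x. outer x x)" by (rule int_cont) (intro continuous_intros)
  have "transpose (Sig \<rho>) = integral\<^sup>L \<rho> (\<lambda>x. transpose (outer x x))"
    unfolding Sig_def by (rule lin_int[OF lt io, symmetric])
  also have "(\<lambda>x. transpose (outer x x)) = (\<lambda>x. outer x x)"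
    by (simp add: fun_eq_iff vec_eq_iff transpose_def outer_def mult.commute)
  finally show ?thesis by (simp add: Sig_def)
qed

lemma W_mean: "integral\<^sup>L (W i) (\<lambda>x. x) = Sig \<rho> *v gam H i"
proof -
  have ix: "integrable \<rho> (\<lambda>x. x)" by (rule int_cont) (intro continuous_intros)
  have io: "integrable \<rho> (\<lambda>x. outer x x)" by (rule int_cont) (intro continuous_intros)
  have "integral\<^sup>L (W i) (\<lambda>x. x) = integral\<^sup>L \<rho> (\<lambda>x. (1 + gam H i \<bullet> x) *\<^sub>R x)"
    by (rule W_int(2)) (intro continuous_intros)
  also have "(\<lambda>x. (1 + gam H i \<bullet> x) *\<^sub>R x) = (\<lambda>x. x + outer x x *v gam H i)"
    by (simp add: fun_eq_iff outer_mv algebra_simps inner_commute)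
  also have "integral\<^sup>L \<rho> \<dots> = integral\<^sup>L \<rho> (\<lambda>x. x) + integral\<^sup>L \<rho> (\<lambda>x. outer x x *v gam H i)"
    by (rule Bochner_Integration.integral_add[OF ix]) (unfold outer_mv, rule int_cont, intro continuous_intros)
  also have "integral\<^sup>L \<rho> (\<lambda>x. outer x x *v gam H i) = Sig \<rho> *v gam H i"
    unfolding Sig_def by (rule lin_int[OF lin_mv io])
  finally show ?thesis using rho_mean by simp
qed


context
  assumes inv: "invertible (Sig \<rho>)"
begin

lemma AS: "matrix_inv (Sig \<rho>) ** Sig \<rho> = mat 1" "Sig \<rho> ** matrix_inv (Sig \<rho>) = mat 1"
  using matrix_inv_props[OF inv] by auto

lemma A_sym: "transpose (matrix_inv (Sig \<rho>)) = matrix_inv (Sig \<rho>)"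
  by (rule matrix_inv_sym[OF inv S_sym])

lemma W_cmean: "integral\<^sup>L (W i) (\<lambda>x. matrix_inv (Sig \<rho>) *v x - gam H i) = 0"
proof -
  interpret prob_space "W i" by (rule W_prob)
  have ix: "integrable (W i) (\<lambda>x. x)" by (rule W_int(1)) (intro continuous_intros)
  have "integral\<^sup>L (W i) (\<lambda>x. matrix_inv (Sig \<rho>) *v x - gam H i)
     = integral\<^sup>L (W i) (\<lambda>x. matrix_inv (Sig \<rho>) *v x) - gam H i"
    by (subst Bochner_Integration.integral_diff)
       (auto intro!: W_int(1) continuous_intros simp: prob_space)
  also have "integral\<^sup>L (W i) (\<lambda>x. matrix_inv (Sig \<rho>) *v x) = matrix_inv (Sig \<rho>) *v integral\<^sup>L (W i) (\<lambda>x. x)"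
    using integral_bounded_linear[OF matrix_vector_mul_bounded_linear ix] .
  finally show ?thesis using AS by (simp add: W_mean matrix_vector_mul_assoc)
qed

lemma W_sq: "integral\<^sup>L (W i) (\<lambda>x. (norm (matrix_inv (Sig \<rho>) *v x - gam H i))\<^sup>2)
   = trace (matrix_inv (Sig \<rho>) ** Bmat H \<rho> i ** matrix_inv (Sig \<rho>)) - gam H i \<bullet> gam H i"
proof -
  define A where "A = matrix_inv (Sig \<rho>)"
  define g where "g = gam H i"
  define w where "w = A *v g"
  define T where "T = (\<lambda>M::real^'k^'k. trace (A ** M ** A))"
  have As: "transpose A = A" using A_sym A_def by simp
  have Tl: "linear T" unfolding T_def by (rule lin_tr)
  have pt: "(1 + g \<bullet> x) *\<^sub>R (norm (A *v x - g))\<^sup>2 =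
      T ((1 + g \<bullet> x) *\<^sub>R outer x x) - 2 * (x \<bullet> w) - 2 * (g \<bullet> (outer x x *v w)) + (1 + g \<bullet> x) * (g \<bullet> g)" for x
  proof -
    have "T ((1 + g \<bullet> x) *\<^sub>R outer x x) = (1 + g \<bullet> x) * T (outer x x)"
      using linear_scale[OF Tl] by simp
    also have "T (outer x x) = (A *v x) \<bullet> (A *v x)" unfolding T_def tr_outer As ..
    finally have 1: "T ((1 + g \<bullet> x) *\<^sub>R outer x x) = (1 + g \<bullet> x) * ((A *v x) \<bullet> (A *v x))" .
    have 2: "(A *v x) \<bullet> g = x \<bullet> w"
      unfolding w_def by (metis As dot_lmul_matrix inner_commute transpose_matrix_vector vector_transpose_matrix)
    have 3: "g \<bullet> (outer x x *v w) = (x \<bullet> w) * (g \<bullet> x)" by (simp add: outer_mv)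
    show ?thesis unfolding 1 3 power2_norm_eq_inner
      by (simp add: inner_diff_left inner_diff_right 2 inner_commute[of g "A *v x"] algebra_simps)
  qed
  have io: "integrable \<rho> (\<lambda>x. (1 + g \<bullet> x) *\<^sub>R outer x x)" by (rule int_cont) (intro continuous_intros)
  have ix: "integrable \<rho> (\<lambda>x. x)" by (rule int_cont) (intro continuous_intros)
  have io2: "integrable \<rho> (\<lambda>x. outer x x)" by (rule int_cont) (intro continuous_intros)
  have i1: "integrable \<rho> (\<lambda>x. T ((1 + g \<bullet> x) *\<^sub>R outer x x))"
    using integrable_bounded_linear[OF Tl[unfolded linear_conv_bounded_linear] io] .
  have i3: "integrable \<rho> (\<lambda>x. g \<bullet> (outer x x *v w))"
    unfolding outer_mv by (rule int_cont) (intro continuous_intros)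
  have i2: "integrable \<rho> (\<lambda>x. x \<bullet> w)" by (rule int_cont) (intro continuous_intros)
  have i4: "integrable \<rho> (\<lambda>x. (1 + g \<bullet> x) * (g \<bullet> g))" by (rule int_cont) (intro continuous_intros)
  have "integral\<^sup>L (W i) (\<lambda>x. (norm (A *v x - g))\<^sup>2) = integral\<^sup>L \<rho> (\<lambda>x. (1 + g \<bullet> x) *\<^sub>R (norm (A *v x - g))\<^sup>2)"
    unfolding g_def by (rule W_int(2)) (intro continuous_intros)
  also have "\<dots> = integral\<^sup>L \<rho> (\<lambda>x. T ((1 + g \<bullet> x) *\<^sub>R outer x x) - 2 * (x \<bullet> w) - 2 * (g \<bullet> (outer x x *v w)) + (1 + g \<bullet> x) * (g \<bullet> g))"
    unfolding pt ..
  also have "\<dots> = integral\<^sup>L \<rho> (\<lambda>x. T ((1 + g \<bullet> x) *\<^sub>R outer x x)) - 2 * integral\<^sup>L \<rho> (\<lambda>x. x \<bullet> w)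
      - 2 * integral\<^sup>L \<rho> (\<lambda>x. g \<bullet> (outer x x *v w)) + integral\<^sup>L \<rho> (\<lambda>x. (1 + g \<bullet> x) * (g \<bullet> g))"
    using i1 i2 i3 i4 by simp
  also have "integral\<^sup>L \<rho> (\<lambda>x. T ((1 + g \<bullet> x) *\<^sub>R outer x x)) = T (Bmat H \<rho> i)"
    unfolding Bmat_def g_def by (rule lin_int[OF Tl]) (use io g_def in simp)
  also have "integral\<^sup>L \<rho> (\<lambda>x. x \<bullet> w) = 0" using ix rho_mean by simp
  also have "integral\<^sup>L \<rho> (\<lambda>x. g \<bullet> (outer x x *v w)) = g \<bullet> (Sig \<rho> *v w)"
  proof -
    have "linear (\<lambda>M::real^'k^'k. g \<bullet> (M *v w))"
      by (rule linearI) (simp_all add: matrix_vector_mult_add_rdistrib inner_add_right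
          vec_eq_iff matrix_vector_mult_def inner_vec_def sum_distrib_left sum.distrib algebra_simps)
    then show ?thesis unfolding Sig_def by (rule lin_int[OF _ io2])
  qed
  also have "Sig \<rho> *v w = g" unfolding w_def A_def using AS by (simp add: matrix_vector_mul_assoc)
  also have "integral\<^sup>L \<rho> (\<lambda>x. (1 + g \<bullet> x) * (g \<bullet> g)) = g \<bullet> g"
    using int1[of i] g_def by simp
  finally show ?thesis unfolding T_def A_def g_def by simp
qed


lemma W_meas: "continuous_on UNIV f \<Longrightarrow> f \<in> borel_measurable (W i)"
  unfolding Wcond_def using meas_cont measurable_cong_sets[OF sets_density refl] by blast

lemma P_prod: "product_prob_space (\<lambda>m. W (c m))"
  by (simp add: product_prob_space_def product_sigma_finite_def prob_space_imp_sigma_finite W_prob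
      product_prob_space_axioms_def W_prob)

lemma P_coord:
  fixes f :: "real^'k \<Rightarrow> 'b::{banach,second_countable_topology}"
  assumes "m < n" "continuous_on UNIV f"
  shows "integrable (fc_law H \<rho> n c) (\<lambda>X. f (X m))"
    and "integral\<^sup>L (fc_law H \<rho> n c) (\<lambda>X. f (X m)) = integral\<^sup>L (W (c m)) f"
proof -
  have d: "distr (fc_law H \<rho> n c) (W (c m)) (\<lambda>X. X m) = W (c m)"
    unfolding fc_law_def using assms(1) by (intro distr_PiM_component W_prob) auto
  have mm: "(\<lambda>X. X m) \<in> measurable (fc_law H \<rho> n c) (W (c m))"
    unfolding fc_law_def using assms(1) by (intro measurable_component_singleton) auto
  have fm: "f \<in> borel_measurable (W (c m))" by (rule W_meas[OF assms(2)])
  show "integrable (fc_law H \<rho> n c) (\<lambda>X. f (X m))"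
    using integrable_distr_eq[OF mm fm] d W_int(1)[OF assms(2)] by simp
  show "integral\<^sup>L (fc_law H \<rho> n c) (\<lambda>X. f (X m)) = integral\<^sup>L (W (c m)) f"
    using integral_distr[OF mm fm] d by simp
qed

lemma P_pair:
  fixes f g :: "real^'k \<Rightarrow> real"
  assumes "m < n" "m' < n" "continuous_on UNIV f" "continuous_on UNIV g"
  shows "integrable (fc_law H \<rho> n c) (\<lambda>X. f (X m) * g (X m'))"
    and "integral\<^sup>L (fc_law H \<rho> n c) (\<lambda>X. f (X m) * g (X m')) =
      (if m = m' then integral\<^sup>L (W (c m)) (\<lambda>x. f x * g x)
       else integral\<^sup>L (W (c m)) f * integral\<^sup>L (W (c m')) g)"
proof -
  interpret product_prob_space "\<lambda>m. W (c m)" by (rule P_prod)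
  define h where "h = (\<lambda>j x. (if j = m then f x else 1) * (if j = m' then g x else 1))"
  have hc: "continuous_on UNIV (h j)" for j
    unfolding h_def using assms by (cases "j = m"; cases "j = m'") (auto intro!: continuous_intros)
  have hi: "integrable (W (c j)) (h j)" for j by (rule W_int(1)[OF hc])
  have eq: "(\<Prod>j\<in>{..<n}. h j (X j)) = f (X m) * g (X m')" for X
    using assms(1,2) by (simp add: h_def prod.distrib)
  show "integrable (fc_law H \<rho> n c) (\<lambda>X. f (X m) * g (X m'))"
    using product_integrable_prod[of "{..<n}" h] hi unfolding fc_law_def eq by simp
  have "integral\<^sup>L (fc_law H \<rho> n c) (\<lambda>X. f (X m) * g (X m')) = (\<Prod>j\<in>{..<n}. integral\<^sup>L (W (c j)) (h j))"
    using product_integral_prod[of "{..<n}" h] hi unfolding fc_law_def eq by simp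
  also have "\<dots> = (if m = m' then integral\<^sup>L (W (c m)) (\<lambda>x. f x * g x)
       else integral\<^sup>L (W (c m)) f * integral\<^sup>L (W (c m')) g)"
  proof (cases "m = m'")
    case True
    have "integral\<^sup>L (W (c j)) (h j) = (if j = m then integral\<^sup>L (W (c m)) (\<lambda>x. f x * g x) else 1)" for j
    proof -
      interpret prob_space "W (c j)" by (rule W_prob)
      show ?thesis using True by (simp add: h_def prob_space.prob_space[OF W_prob])
    qed
    then show ?thesis using True assms(1) by simp
  next
    case False
    have "integral\<^sup>L (W (c j)) (h j) = (if j = m then integral\<^sup>L (W (c m)) f else 1) *
        (if j = m' then integral\<^sup>L (W (c m')) g else 1)" for j
    proof -
      interpret prob_space "W (c j)" by (rule W_prob)
      show ?thesis using False by (simp add: h_def prob_space.prob_space[OF W_prob])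
    qed
    then show ?thesis using False assms(1,2) by (simp add: prod.distrib)
  qed
  finally show "integral\<^sup>L (fc_law H \<rho> n c) (\<lambda>X. f (X m) * g (X m')) =
      (if m = m' then integral\<^sup>L (W (c m)) (\<lambda>x. f x * g x)
       else integral\<^sup>L (W (c m)) f * integral\<^sup>L (W (c m')) g)" .
qed

lemma regroup:
  fixes F :: "'d \<Rightarrow> 'v::real_vector"
  assumes comp: "composition n \<theta> c"
  shows "(\<Sum>m<n. F (c m)) = (\<Sum>i\<in>UNIV. (real n * \<theta>$i) *\<^sub>R F i)"
proof -
  have "(\<Sum>m<n. F (c m)) = (\<Sum>i\<in>UNIV. \<Sum>m\<in>{m. m \<in> {..<n} \<and> c m = i}. F (c m))"
    by (rule sum.group[symmetric]) auto
  also have "\<dots> = (\<Sum>i\<in>UNIV. real (card {m. m < n \<and> c m = i}) *\<^sub>R F i)"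
    by (rule sum.cong) (auto simp: sum_constant_scaleR)
  finally show ?thesis using comp by (simp add: composition_def)
qed

lemma est_eq:
  assumes n1: "n \<ge> 1" and th: "(\<Sum>i\<in>UNIV. \<theta>$i) = 1" and comp: "composition n \<theta> c"
  shows "est H \<rho> n X = \<theta> + (1 / real n) *\<^sub>R (H *v (\<Sum>m<n. matrix_inv (Sig \<rho>) *v X m - gam H (c m)))"
proof -
  define A where "A = matrix_inv (Sig \<rho>)"
  define Z where "Z = (\<Sum>m<n. A *v X m - gam H (c m))"
  have s1: "(\<Sum>m<n. gam H (c m)) = real n *\<^sub>R (transpose H *v \<theta>)"
    using regroup[OF comp, of "gam H"] Ht_theta[of \<theta>, symmetric]
    by (simp add: scaleR_sum_right)
  have "A *v ((1 / real n) *\<^sub>R (\<Sum>m<n. X m)) = (1 / real n) *\<^sub>R (\<Sum>m<n. A *v X m)"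
    by (simp add: matrix_vector_mult_scaleR linear_sum[OF matrix_vector_mul_linear])
  also have "(\<Sum>m<n. A *v X m) = Z + (\<Sum>m<n. gam H (c m))"
    unfolding Z_def by (simp add: sum_subtractf)
  also have "(1 / real n) *\<^sub>R (Z + (\<Sum>m<n. gam H (c m))) = (1 / real n) *\<^sub>R Z + transpose H *v \<theta>"
    using n1 by (simp add: s1 scaleR_add_right)
  finally have e1: "A *v ((1 / real n) *\<^sub>R (\<Sum>m<n. X m)) = (1 / real n) *\<^sub>R Z + transpose H *v \<theta>" .
  have "H *v ((1 / real n) *\<^sub>R Z + transpose H *v \<theta>) = (1 / real n) *\<^sub>R (H *v Z) + (\<theta> - (1 / real CARD('d)) *\<^sub>R (\<chi> i. 1))"
    using proj[of \<theta>] th by (simp add: matrix_vector_right_distrib matrix_vector_mult_scaleR)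
  moreover have "(1 / real CARD('d)) *\<^sub>R (\<chi> i. (1::real)) = ((\<chi> i. 1 / real CARD('d)) :: real^'d)"
    by (simp add: vec_eq_iff)
  ultimately show ?thesis unfolding est_def e1[unfolded A_def] Z_def[unfolded A_def]
    by (simp add: algebra_simps)
qed


lemma main_risk:
  assumes n1: "n \<ge> 1" and th: "(\<Sum>i\<in>UNIV. \<theta>$i) = 1" and comp: "composition n \<theta> c"
  shows "integrable (fc_law H \<rho> n c) (est H \<rho> n) \<and>
            integral\<^sup>L (fc_law H \<rho> n c) (est H \<rho> n) = \<theta> \<and>
            integrable (fc_law H \<rho> n c) (\<lambda>X. (norm (est H \<rho> n X - \<theta>))\<^sup>2) \<and>
            fc_risk H \<rho> n \<theta> c =
              (1 / real n) * (\<Sum>i\<in>UNIV. \<theta>$i *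
                 (trace (matrix_inv (Sig \<rho>) ** Bmat H \<rho> i ** matrix_inv (Sig \<rho>))
                  - (real CARD('d) - 1) / real CARD('d)))"
proof -
  define A where "A = matrix_inv (Sig \<rho>)"
  define P where "P = fc_law H \<rho> n c"
  define F where "F = (\<lambda>m x. A *v x - gam H (c m))"
  have Fc: "continuous_on UNIV (F m)" for m unfolding F_def by (intro continuous_intros)
  have Fac: "continuous_on UNIV (\<lambda>x. F m x $ a)" for m a unfolding F_def by (intro continuous_intros)
  have estE: "est H \<rho> n X = \<theta> + (1 / real n) *\<^sub>R (H *v (\<Sum>m<n. F m (X m)))" for X
    unfolding F_def A_def by (rule est_eq[OF n1 th comp])
  have Pp: "prob_space P" unfolding P_def fc_law_def by (intro prob_space_PiM W_prob)
  interpret P: prob_space P by (rule Pp)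
  have iY: "integrable P (\<lambda>X. F m (X m))" if "m < n" for m
    unfolding P_def by (rule P_coord(1)[OF that Fc])
  have eY: "integral\<^sup>L P (\<lambda>X. F m (X m)) = 0" if "m < n" for m
  proof -
    have "integral\<^sup>L P (\<lambda>X. F m (X m)) = integral\<^sup>L (W (c m)) (F m)"
      unfolding P_def by (rule P_coord(2)[OF that Fc])
    also have "\<dots> = 0" unfolding F_def A_def by (rule W_cmean)
    finally show ?thesis .
  qed
  have iS: "integrable P (\<lambda>X. \<Sum>m<n. F m (X m))" using iY by auto
  have eS: "integral\<^sup>L P (\<lambda>X. \<Sum>m<n. F m (X m)) = 0" using iY eY by simp
  have bl: "bounded_linear (\<lambda>v. (1 / real n) *\<^sub>R (H *v v))"
    by (intro bounded_linear_compose[OF bounded_linear_scaleR_right] matrix_vector_mul_bounded_linear)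
  have iL: "integrable P (\<lambda>X. (1 / real n) *\<^sub>R (H *v (\<Sum>m<n. F m (X m))))"
    using integrable_bounded_linear[OF bl iS] .
  have eL: "integral\<^sup>L P (\<lambda>X. (1 / real n) *\<^sub>R (H *v (\<Sum>m<n. F m (X m)))) = 0"
    using integral_bounded_linear[OF bl iS] eS by simp
  have ie: "integrable P (est H \<rho> n)"
    unfolding estE using iL by simp
  have ee: "integral\<^sup>L P (est H \<rho> n) = \<theta>"
    unfolding estE using iL eL by (simp add: P.prob_space)
  have nE: "(norm (est H \<rho> n X - \<theta>))\<^sup>2 = (1 / real n)^2 *
      (\<Sum>m<n. \<Sum>m'<n. \<Sum>a\<in>UNIV. F m (X m) $ a * F m' (X m') $ a)" for X
  proof -
    have "(norm (est H \<rho> n X - \<theta>))\<^sup>2 = (1 / real n)^2 * (norm (\<Sum>m<n. F m (X m)))\<^sup>2"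
      unfolding estE by (simp add: norm_H power_divide)
    also have "(norm (\<Sum>m<n. F m (X m)))\<^sup>2 = (\<Sum>m<n. \<Sum>m'<n. F m (X m) \<bullet> F m' (X m'))"
      by (simp add: power2_norm_eq_inner inner_sum_left inner_sum_right inner_commute)
    finally show ?thesis by (simp add: inner_vec_def)
  qed
  have iT: "integrable P (\<lambda>X. F m (X m) $ a * F m' (X m') $ a)" if "m < n" "m' < n" for m m' a
    unfolding P_def by (rule P_pair(1)[OF that Fac Fac])
  have eT: "integral\<^sup>L P (\<lambda>X. F m (X m) $ a * F m' (X m') $ a) =
      (if m = m' then integral\<^sup>L (W (c m)) (\<lambda>x. F m x $ a * F m x $ a) else 0)" if "m < n" "m' < n" for m m' a
  proof -
    have z: "integral\<^sup>L (W (c j)) (\<lambda>x. F j x $ a) = 0" for j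
    proof -
      have "integrable (W (c j)) (F j)" by (rule W_int(1)[OF Fc])
      then have "integral\<^sup>L (W (c j)) (\<lambda>x. F j x $ a) = integral\<^sup>L (W (c j)) (F j) $ a"
        using integral_bounded_linear[OF bounded_linear_vec_nth] by blast
      also have "integral\<^sup>L (W (c j)) (F j) = 0" unfolding F_def A_def by (rule W_cmean)
      finally show ?thesis by simp
    qed
    show ?thesis unfolding P_def P_pair(2)[OF that Fac Fac] using z by simp
  qed
  have in2: "integrable P (\<lambda>X. (norm (est H \<rho> n X - \<theta>))\<^sup>2)"
    unfolding nE using iT by (intro integrable_mult_right Bochner_Integration.integrable_sum) auto
  have "integral\<^sup>L P (\<lambda>X. (norm (est H \<rho> n X - \<theta>))\<^sup>2) = (1 / real n)^2 *
      (\<Sum>m<n. \<Sum>m'<n. \<Sum>a\<in>UNIV. integral\<^sup>L P (\<lambda>X. F m (X m) $ a * F m' (X m') $ a))"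
  proof -
    have i2: "integrable P (\<lambda>X. \<Sum>a\<in>UNIV. F m (X m) $ a * F m' (X m') $ a)" if "m < n" "m' < n" for m m'
      using iT[OF that] by (rule Bochner_Integration.integrable_sum)
    have i1: "integrable P (\<lambda>X. \<Sum>m'<n. \<Sum>a\<in>UNIV. F m (X m) $ a * F m' (X m') $ a)" if "m < n" for m
      using i2[OF that] by (rule Bochner_Integration.integrable_sum) auto
    have "integral\<^sup>L P (\<lambda>X. \<Sum>m<n. \<Sum>m'<n. \<Sum>a\<in>UNIV. F m (X m) $ a * F m' (X m') $ a)
       = (\<Sum>m<n. integral\<^sup>L P (\<lambda>X. \<Sum>m'<n. \<Sum>a\<in>UNIV. F m (X m) $ a * F m' (X m') $ a))"
      using i1 by (intro Bochner_Integration.integral_sum) auto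
    also have "\<dots> = (\<Sum>m<n. \<Sum>m'<n. integral\<^sup>L P (\<lambda>X. \<Sum>a\<in>UNIV. F m (X m) $ a * F m' (X m') $ a))"
      using i2 by (intro sum.cong refl Bochner_Integration.integral_sum) auto
    also have "\<dots> = (\<Sum>m<n. \<Sum>m'<n. \<Sum>a\<in>UNIV. integral\<^sup>L P (\<lambda>X. F m (X m) $ a * F m' (X m') $ a))"
      using iT by (intro sum.cong refl Bochner_Integration.integral_sum) auto
    finally show ?thesis unfolding nE by simp
  qed
  also have "\<dots> = (1 / real n)^2 * (\<Sum>m<n. \<Sum>m'<n. \<Sum>a\<in>UNIV.
      (if m = m' then integral\<^sup>L (W (c m)) (\<lambda>x. F m x $ a * F m x $ a) else 0))"
    using eT by (intro arg_cong[where f="\<lambda>x. _ * x"] sum.cong refl) auto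
  also have "\<dots> = (1 / real n)^2 * (\<Sum>m<n. \<Sum>a\<in>UNIV. integral\<^sup>L (W (c m)) (\<lambda>x. F m x $ a * F m x $ a))"
  proof -
    have "(\<Sum>m'<n. \<Sum>a\<in>UNIV. (if m = m' then integral\<^sup>L (W (c m)) (\<lambda>x. F m x $ a * F m x $ a) else 0))
        = (\<Sum>a\<in>UNIV. integral\<^sup>L (W (c m)) (\<lambda>x. F m x $ a * F m x $ a))" if "m < n" for m
    proof -
      have "(\<Sum>m'<n. \<Sum>a\<in>UNIV. (if m = m' then integral\<^sup>L (W (c m)) (\<lambda>x. F m x $ a * F m x $ a) else 0))
        = (\<Sum>m'<n. (if m = m' then (\<Sum>a\<in>UNIV. integral\<^sup>L (W (c m)) (\<lambda>x. F m x $ a * F m x $ a)) else 0))"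
        by (rule sum.cong) auto
      also have "\<dots> = (\<Sum>a\<in>UNIV. integral\<^sup>L (W (c m)) (\<lambda>x. F m x $ a * F m x $ a))"
        using that by simp
      finally show ?thesis .
    qed
    then show ?thesis by simp
  qed
  also have "\<dots> = (1 / real n)^2 * (\<Sum>m<n. trace (A ** Bmat H \<rho> (c m) ** A) - (real CARD('d) - 1) / real CARD('d))"
  proof -
    have "(\<Sum>a\<in>UNIV. integral\<^sup>L (W (c m)) (\<lambda>x. F m x $ a * F m x $ a)) =
        trace (A ** Bmat H \<rho> (c m) ** A) - (real CARD('d) - 1) / real CARD('d)" for m
    proof -
      have "(\<Sum>a\<in>UNIV. integral\<^sup>L (W (c m)) (\<lambda>x. F m x $ a * F m x $ a)) =
          integral\<^sup>L (W (c m)) (\<lambda>x. \<Sum>a\<in>UNIV. F m x $ a * F m x $ a)"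
        by (rule Bochner_Integration.integral_sum[symmetric]) (intro W_int(1) continuous_intros Fac)
      also have "(\<lambda>x. \<Sum>a\<in>UNIV. F m x $ a * F m x $ a) = (\<lambda>x. (norm (A *v x - gam H (c m)))\<^sup>2)"
        by (simp add: F_def power2_norm_eq_inner inner_vec_def)
      also have "integral\<^sup>L (W (c m)) \<dots> = trace (A ** Bmat H \<rho> (c m) ** A) - gam H (c m) \<bullet> gam H (c m)"
        unfolding A_def by (rule W_sq)
      finally show ?thesis by (simp add: gam_norm diff_divide_distrib)
    qed
    then show ?thesis by simp
  qed
  also have "\<dots> = (1 / real n) * (\<Sum>i\<in>UNIV. \<theta>$i *
                 (trace (A ** Bmat H \<rho> i ** A) - (real CARD('d) - 1) / real CARD('d)))"
    using n1 by (simp add: regroup[OF comp, of "\<lambda>i. trace (A ** Bmat H \<rho> i ** A) - (real CARD('d) - 1) / real CARD('d)"]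
        sum_distrib_left power2_eq_square)
  finally have "fc_risk H \<rho> n \<theta> c = (1 / real n) * (\<Sum>i\<in>UNIV. \<theta>$i *
                 (trace (A ** Bmat H \<rho> i ** A) - (real CARD('d) - 1) / real CARD('d)))"
    unfolding fc_risk_def P_def .
  with ie ee in2 show ?thesis unfolding P_def A_def by simp
qed

lemma sum_trB: "(\<Sum>i\<in>UNIV. trace (matrix_inv (Sig \<rho>) ** Bmat H \<rho> i ** matrix_inv (Sig \<rho>)))
   = real CARD('d) * trace (matrix_inv (Sig \<rho>))"
proof -
  define A where "A = matrix_inv (Sig \<rho>)"
  define T where "T = (\<lambda>M::real^'k^'k. trace (A ** M ** A))"
  have Tl: "linear T" unfolding T_def by (rule lin_tr)
  have io: "integrable \<rho> (\<lambda>x. (1 + gam H i \<bullet> x) *\<^sub>R outer x x)" for i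
    by (rule int_cont) (intro continuous_intros)
  have io2: "integrable \<rho> (\<lambda>x. outer x x)" by (rule int_cont) (intro continuous_intros)
  have "(\<Sum>i\<in>UNIV. Bmat H \<rho> i) = integral\<^sup>L \<rho> (\<lambda>x. \<Sum>i\<in>UNIV. (1 + gam H i \<bullet> x) *\<^sub>R outer x x)"
    unfolding Bmat_def using io by (intro Bochner_Integration.integral_sum[symmetric]) auto
  also have "(\<lambda>x. \<Sum>i\<in>UNIV. (1 + gam H i \<bullet> x) *\<^sub>R outer x x) = (\<lambda>x. real CARD('d) *\<^sub>R outer x x)"
  proof
    fix x
    have "(\<Sum>i\<in>UNIV. (1 + gam H i \<bullet> x)) = real CARD('d) + (\<Sum>i\<in>UNIV. gam H i) \<bullet> x"
      by (simp add: sum.distrib inner_sum_left)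
    then have "(\<Sum>i\<in>UNIV. (1 + gam H i \<bullet> x)) = real CARD('d)" by (simp add: gam_sum)
    then show "(\<Sum>i\<in>UNIV. (1 + gam H i \<bullet> x) *\<^sub>R outer x x) = real CARD('d) *\<^sub>R outer x x"
      by (simp add: scaleR_sum_left[symmetric])
  qed
  also have "integral\<^sup>L \<rho> (\<lambda>x. real CARD('d) *\<^sub>R outer x x) = real CARD('d) *\<^sub>R Sig \<rho>"
    unfolding Sig_def by simp
  finally have sB: "(\<Sum>i\<in>UNIV. Bmat H \<rho> i) = real CARD('d) *\<^sub>R Sig \<rho>" .
  have "(\<Sum>i\<in>UNIV. T (Bmat H \<rho> i)) = T (\<Sum>i\<in>UNIV. Bmat H \<rho> i)"
    by (rule linear_sum[OF Tl, symmetric])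
  also have "\<dots> = real CARD('d) * T (Sig \<rho>)" unfolding sB using linear_scale[OF Tl] by simp
  also have "T (Sig \<rho>) = trace A" unfolding T_def A_def using AS by (simp add: matrix_mul_assoc)
  finally show ?thesis unfolding T_def A_def .
qed
end

end

end


lemma comp_exists:
  assumes "admissible n (\<theta>::real^'d)"
  shows "\<exists>c. composition n \<theta> c"
proof -
  have "\<forall>i. \<exists>k::nat. real k = real n * \<theta>$i"
  proof
    fix i
    obtain z where z: "real n * \<theta>$i = of_int z" using assms by (auto simp: admissible_def Ints_def)
    have "0 \<le> real n * \<theta>$i" using assms by (simp add: admissible_def)
    then have "z \<ge> 0" using z by simp
    then show "\<exists>k::nat. real k = real n * \<theta>$i" using z by (intro exI[of _ "nat z"]) simp
  qed
  then obtain k where k: "\<And>i. real (k i) = real n * \<theta>$i" by metis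
  define Sg where "Sg = (SIGMA i:(UNIV::'d set). {..<k i})"
  have "real (card Sg) = (\<Sum>i\<in>UNIV. real (k i))" unfolding Sg_def by (simp add: card_SigmaI)
  also have "\<dots> = real n" using assms by (simp add: k sum_distrib_left[symmetric] admissible_def)
  finally have cS: "card Sg = n" by simp
  have fS: "finite Sg" unfolding Sg_def by simp
  obtain f where f: "bij_betw f {..<n} Sg"
    using finite_same_card_bij[of "{..<n}" Sg] fS cS by auto
  define c where "c m = fst (f m)" for m
  have "card {m. m < n \<and> c m = i} = k i" for i
  proof -
    have "f ` {m. m < n \<and> c m = i} = {i} \<times> {..<k i}"
    proof -
      have "f ` {m. m < n \<and> c m = i} = {x \<in> f ` {..<n}. fst x = i}" unfolding c_def by auto
      also have "\<dots> = {x \<in> Sg. fst x = i}" using f by (simp add: bij_betw_def)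
      also have "\<dots> = {i} \<times> {..<k i}" unfolding Sg_def by auto
      finally show ?thesis .
    qed
    moreover have "inj_on f {m. m < n \<and> c m = i}"
      using f by (auto simp: bij_betw_def intro: inj_on_subset)
    ultimately have "card {m. m < n \<and> c m = i} = card ({i} \<times> {..<k i})"
      by (metis card_image)
    then show ?thesis by simp
  qed
  then have "composition n \<theta> c" by (simp add: composition_def k)
  then show ?thesis by blast
qed

theorem proposition5p3:
  fixes H :: "real^'k^'d" and \<rho> :: "(real^'k) measure" and n :: nat and \<theta> :: "real^'d"
  assumes "CARD('d) = CARD('k) + 1" and "CARD('d) \<ge> 2"
    and "\<forall>j j'. column j H \<bullet> column j' H = (if j = j' then 1 else 0)"
    and "span (columns H) = {u. (\<Sum>i\<in>UNIV. u$i) = 0}"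
    and "anchored H \<rho>"
    and "invertible (Sig \<rho>)"
    and "n \<ge> 1"
    and "admissible n \<theta>"
  shows "(\<forall>c. composition n \<theta> c \<longrightarrow>
            integrable (fc_law H \<rho> n c) (est H \<rho> n) \<and>
            integral\<^sup>L (fc_law H \<rho> n c) (est H \<rho> n) = \<theta> \<and>
            integrable (fc_law H \<rho> n c) (\<lambda>X. (norm (est H \<rho> n X - \<theta>))\<^sup>2) \<and>
            fc_risk H \<rho> n \<theta> c =
              (1 / real n) * (\<Sum>i\<in>UNIV. \<theta>$i *
                 (trace (matrix_inv (Sig \<rho>) ** Bmat H \<rho> i ** matrix_inv (Sig \<rho>))
                  - (real CARD('d) - 1) / real CARD('d))))
       \<and> (\<exists>a b. \<forall>\<theta>'. admissible n \<theta>' \<longrightarrow> R_fc H \<rho> n \<theta>' = a \<bullet> \<theta>' + b)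
       \<and> (SUP \<theta>'\<in>{\<theta>'. admissible n \<theta>'}. R_fc H \<rho> n \<theta>')
            = Max (range (\<lambda>i. R_fc H \<rho> n (axis i 1)))
       \<and> (1 / real CARD('d)) * (\<Sum>i\<in>UNIV. R_fc H \<rho> n (axis i 1))
            = (1 / real n) * (trace (matrix_inv (Sig \<rho>)) - (real CARD('d) - 1) / real CARD('d))"
proof -
  note orth = assms(3) and spn = assms(4) and anc = assms(5) and inv = assms(6) and n1 = assms(7)
  define A where "A = matrix_inv (Sig \<rho>)"
  define q where "q = (real CARD('d) - 1) / real CARD('d)"
  define a where "a = (\<chi> i. (1 / real n) * (trace (A ** Bmat H \<rho> i ** A) - q))"
  have R: "R_fc H \<rho> n \<theta>' = a \<bullet> \<theta>'" if ad: "admissible n \<theta>'" for \<theta>'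
  proof -
    have cc: "composition n \<theta>' (SOME c. composition n \<theta>' c)"
      using comp_exists[OF ad] by (rule someI_ex)
    have s1: "(\<Sum>i\<in>UNIV. \<theta>'$i) = 1" using ad by (simp add: admissible_def)
    have "R_fc H \<rho> n \<theta>' = (1 / real n) * (\<Sum>i\<in>UNIV. \<theta>'$i *
                 (trace (A ** Bmat H \<rho> i ** A) - q))"
      unfolding R_fc_def A_def q_def using main_risk[OF orth spn anc inv n1 s1 cc] by blast
    also have "\<dots> = a \<bullet> \<theta>'"
      by (simp add: a_def inner_vec_def sum_distrib_left mult_ac)
    finally show ?thesis .
  qed
  have P1: "\<forall>c. composition n \<theta> c \<longrightarrow>
            integrable (fc_law H \<rho> n c) (est H \<rho> n) \<and>
            integral\<^sup>L (fc_law H \<rho> n c) (est H \<rho> n) = \<theta> \<and>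
            integrable (fc_law H \<rho> n c) (\<lambda>X. (norm (est H \<rho> n X - \<theta>))\<^sup>2) \<and>
            fc_risk H \<rho> n \<theta> c =
              (1 / real n) * (\<Sum>i\<in>UNIV. \<theta>$i *
                 (trace (matrix_inv (Sig \<rho>) ** Bmat H \<rho> i ** matrix_inv (Sig \<rho>))
                  - (real CARD('d) - 1) / real CARD('d)))"
  proof (intro allI impI)
    fix c assume cc: "composition n \<theta> c"
    have s1: "(\<Sum>i\<in>UNIV. \<theta>$i) = 1" using assms(8) by (simp add: admissible_def)
    show "integrable (fc_law H \<rho> n c) (est H \<rho> n) \<and>
            integral\<^sup>L (fc_law H \<rho> n c) (est H \<rho> n) = \<theta> \<and>
            integrable (fc_law H \<rho> n c) (\<lambda>X. (norm (est H \<rho> n X - \<theta>))\<^sup>2) \<and>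
            fc_risk H \<rho> n \<theta> c =
              (1 / real n) * (\<Sum>i\<in>UNIV. \<theta>$i *
                 (trace (matrix_inv (Sig \<rho>) ** Bmat H \<rho> i ** matrix_inv (Sig \<rho>))
                  - (real CARD('d) - 1) / real CARD('d)))"
      by (rule main_risk[OF orth spn anc inv n1 s1 cc])
  qed
  have P2: "\<exists>a b. \<forall>\<theta>'. admissible n \<theta>' \<longrightarrow> R_fc H \<rho> n \<theta>' = a \<bullet> \<theta>' + b"
    using R by (intro exI[of _ a] exI[of _ 0]) simp
  have adx: "admissible n (axis i 1 :: real^'d)" for i
  proof -
    have "(\<Sum>j\<in>UNIV. axis i 1 $ j) = (1::real)"
      by (simp add: axis_def)
    moreover have "real n * (axis i 1 :: real^'d) $ j \<in> \<int>" for j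
      by (simp add: axis_def)
    ultimately show ?thesis by (simp add: admissible_def axis_def)
  qed
  have Rx: "R_fc H \<rho> n (axis i 1) = a$i" for i
    using R[OF adx] by (simp add: inner_axis)
  have rg: "range (\<lambda>i. R_fc H \<rho> n (axis i 1)) = range (\<lambda>i. a$i)" by (simp add: Rx)
  obtain i0 where i0: "a$i0 = Max (range (\<lambda>i. a$i))"
  proof -
    have "Max (range (\<lambda>i. a$i)) \<in> range (\<lambda>i. a$i)" by (rule Max_in) auto
    then show ?thesis using that by (metis imageE)
  qed
  have le: "a \<bullet> \<theta>' \<le> a$i0" if ad: "admissible n \<theta>'" for \<theta>'
  proof -
    have "a \<bullet> \<theta>' = (\<Sum>j\<in>UNIV. a$j * \<theta>'$j)" by (simp add: inner_vec_def)
    also have "\<dots> \<le> (\<Sum>j\<in>UNIV. a$i0 * \<theta>'$j)"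
    proof (rule sum_mono)
      fix j :: 'd
      have "a$j \<le> a$i0" unfolding i0 by (rule Max_ge) auto
      moreover have "0 \<le> \<theta>'$j" using ad by (simp add: admissible_def)
      ultimately show "a$j * \<theta>'$j \<le> a$i0 * \<theta>'$j" by (rule mult_right_mono)
    qed
    also have "\<dots> = a$i0" using ad by (simp add: sum_distrib_left[symmetric] admissible_def)
    finally show ?thesis .
  qed
  have P3: "(SUP \<theta>'\<in>{\<theta>'. admissible n \<theta>'}. R_fc H \<rho> n \<theta>')
            = Max (range (\<lambda>i. R_fc H \<rho> n (axis i 1)))"
  proof -
    have "(SUP \<theta>'\<in>{\<theta>'. admissible n \<theta>'}. R_fc H \<rho> n \<theta>') = a$i0"
    proof (rule cSup_eq_maximum)
      show "a$i0 \<in> (\<lambda>\<theta>'. R_fc H \<rho> n \<theta>') ` {\<theta>'. admissible n \<theta>'}"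
        using adx[of i0] Rx[of i0] by (metis (mono_tags, lifting) image_eqI mem_Collect_eq)
      show "x \<le> a$i0" if "x \<in> (\<lambda>\<theta>'. R_fc H \<rho> n \<theta>') ` {\<theta>'. admissible n \<theta>'}" for x
        using that R le by auto
    qed
    then show ?thesis unfolding rg i0 .
  qed
  have P4: "(1 / real CARD('d)) * (\<Sum>i\<in>UNIV. R_fc H \<rho> n (axis i 1))
            = (1 / real n) * (trace (matrix_inv (Sig \<rho>)) - (real CARD('d) - 1) / real CARD('d))"
  proof -
    have "(\<Sum>i\<in>UNIV. R_fc H \<rho> n (axis i 1)) = (\<Sum>i\<in>UNIV. (1 / real n) * (trace (A ** Bmat H \<rho> i ** A) - q))"
      by (simp add: Rx a_def)
    also have "\<dots> = (1 / real n) * ((\<Sum>i\<in>UNIV. trace (A ** Bmat H \<rho> i ** A)) - real CARD('d) * q)"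
      by (simp add: sum_divide_distrib[symmetric] sum_subtractf)
    also have "(\<Sum>i\<in>UNIV. trace (A ** Bmat H \<rho> i ** A)) = real CARD('d) * trace A"
      unfolding A_def by (rule sum_trB[OF orth spn anc inv])
    finally have e: "(\<Sum>i\<in>UNIV. R_fc H \<rho> n (axis i 1)) = (1 / real n) * (real CARD('d) * (trace A - q))"
      by (simp add: right_diff_distrib)
    have d0: "real CARD('d) \<noteq> 0" by simp
    show ?thesis unfolding e q_def[symmetric] A_def[symmetric] using d0 by simp
  qed
  show ?thesis using P1 P2 P3 P4 by blast
qed

end
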